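(* In the setting below, let $z_0=(u_0,v_0)$ be a singular point of $P$ with $k_1\neq0$. Then the determinant of the Hessian $H(z_0)$ of $\hat R$ with respect to the variables $(\theta_1',r_2',\theta_2')$ at $z_0$ is $$\det H(z_0)=-\frac{4(p-1)(q-1)|\mu|^2}{k_1^2\cos\Theta_2}\,\phi(z_0),\qquad \phi(z_0)=(-1)^\kappa(p-1)|v_0|\sin\Theta_3+(q-1)|\mu||u_0|\sin\Theta_1.$$
   Context: Fix integers $p,q\ge2$ and $\mu\in\mathbb{C}\setminus\{0\}$. Let $P(u,v;\mu)=\mu(u^p+\bar u)+v^q+\bar v$, regarded as a smooth map $\mathbb{R}^4\to\mathbb{R}^2$, with $Q=\operatorname{Re}P$, $R=\operatorname{Im}P$. A singular point is a point where the real differential of $P$ has rank $<2$; every singular point $z_0=(u_0,v_0)$ satisfies $u_0v_0\ne0$. Use polar coordinates $r_1=|u|,\theta_1=\arg u,r_2=|v|,\theta_2=\arg v$ near $z_0$. Fix real representatives $\arg u_0,\arg v_0,\arg\mu$ and an integer $\kappa$ with $\frac{p-1}{2}\arg u_0+\arg\mu=\frac{q-1}{2}\arg v_0+\kappa\pi$. Set $\Theta_1=\frac{p+1}{2}\arg u_0$, $\Theta_2=\frac{p-1}{2}\arg u_0+\arg\mu$, $\Theta_3=\frac{q+1}{2}\arg v_0$, $\Theta_4=\frac{q-1}{2}\arg v_0$, and $(k_1,k_2,k_3,k_4)=(\partial_{r_1}Q,\partial_{\theta_1}Q,\partial_{r_2}Q,\partial_{\theta_2}Q)(z_0)$. When $k_1\ne0$,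 define new coordinates $(r_1',\theta_1',r_2',\theta_2')=(k_1r_1+k_2\theta_1+k_3r_2+k_4\theta_2,\theta_1,r_2,\theta_2)$ near $z_0$, let $s=\frac{\partial R}{\partial r_1'}(z_0)$ and $\hat R=R-sQ$. *)

theory Defs
  imports "HOL-Analysis.Analysis"
begin

definition Pc :: "nat \<Rightarrow> nat \<Rightarrow> complex \<Rightarrow> complex \<Rightarrow> complex \<Rightarrow> complex" where
  "Pc p q \<mu> u v = \<mu> * (u ^ p + cnj u) + v ^ q + cnj v"

definition PR :: "nat \<Rightarrow> nat \<Rightarrow> complex \<Rightarrow> real^4 \<Rightarrow> real^2" where
  "PR p q \<mu> x = (let w = Pc p q \<mu> (Complex (x$1) (x$2)) (Complex (x$3) (x$4))
                  in vector [Re w, Im w])"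

definition singular_point :: "nat \<Rightarrow> nat \<Rightarrow> complex \<Rightarrow> complex \<Rightarrow> complex \<Rightarrow> bool" where
  "singular_point p q \<mu> u v \<longleftrightarrow>
     rank (matrix (frechet_derivative (PR p q \<mu>) (at (vector [Re u, Im u, Re v, Im v])))) < 2"

definition Ppol :: "nat \<Rightarrow> nat \<Rightarrow> complex \<Rightarrow> real^4 \<Rightarrow> complex" where
  "Ppol p q \<mu> x = Pc p q \<mu> (of_real (x$1) * cis (x$2)) (of_real (x$3) * cis (x$4))"

definition pd :: "(real^4 \<Rightarrow> real) \<Rightarrow> 4 \<Rightarrow> real^4 \<Rightarrow> real" where
  "pd f i x = deriv (\<lambda>t. f (x + t *\<^sub>R axis i 1)) 0"

text \<open>Inverse of the coordinate change
  (r1',th1',r2',th2') = (k1 r1 + k2 th1 + k3 r2 + k4 th2, th1, r2, th2):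
  maps new coordinates to old (polar) coordinates.\<close>
definition newcoord_inv :: "real^4 \<Rightarrow> real^4 \<Rightarrow> real^4" where
  "newcoord_inv k y = vector [(y$1 - k$2 * y$2 - k$3 * y$3 - k$4 * y$4) / k$1, y$2, y$3, y$4]"

definition Qpol :: "nat \<Rightarrow> nat \<Rightarrow> complex \<Rightarrow> real^4 \<Rightarrow> real" where
  "Qpol p q \<mu> x = Re (Ppol p q \<mu> x)"

definition kvec :: "nat \<Rightarrow> nat \<Rightarrow> complex \<Rightarrow> real^4 \<Rightarrow> real^4" where
  "kvec p q \<mu> z = (\<chi> i. pd (Qpol p q \<mu>) i z)"

definition newcoord :: "real^4 \<Rightarrow> real^4 \<Rightarrow> real^4" where
  "newcoord k x = vector [k$1 * x$1 + k$2 * x$2 + k$3 * x$3 + k$4 * x$4, x$2, x$3, x$4]"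

definition Qnew :: "nat \<Rightarrow> nat \<Rightarrow> complex \<Rightarrow> real^4 \<Rightarrow> real^4 \<Rightarrow> real" where
  "Qnew p q \<mu> k y = Re (Ppol p q \<mu> (newcoord_inv k y))"

definition Rnew :: "nat \<Rightarrow> nat \<Rightarrow> complex \<Rightarrow> real^4 \<Rightarrow> real^4 \<Rightarrow> real" where
  "Rnew p q \<mu> k y = Im (Ppol p q \<mu> (newcoord_inv k y))"

definition Rhat :: "nat \<Rightarrow> nat \<Rightarrow> complex \<Rightarrow> real^4 \<Rightarrow> real^4 \<Rightarrow> real" where
  "Rhat p q \<mu> z y =
     (let k = kvec p q \<mu> z; s = pd (Rnew p q \<mu> k) 1 (newcoord k z)
      in Rnew p q \<mu> k y - s * Qnew p q \<mu> k y)"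

text \<open>Hessian of R-hat w.r.t. (th1', r2', th2') (new coordinates 2,3,4) at z0.\<close>
definition hessRhat :: "nat \<Rightarrow> nat \<Rightarrow> complex \<Rightarrow> real^4 \<Rightarrow> real^3^3" where
  "hessRhat p q \<mu> z =
     (let k = kvec p q \<mu> z; z' = newcoord k z; f = Rhat p q \<mu> z;
          h = (\<lambda>i j. pd (pd f j) i z')
      in vector [vector [h 2 2, h 2 3, h 2 4],
                 vector [h 3 2, h 3 3, h 3 4],
                 vector [h 4 2, h 4 3, h 4 4]])"

end

theory Submission
  imports Defs
begin


lemma vector_4 [simp]:
 "(vector [a,b,c,d] ::('a::zero)^4)$1 = a"
 "(vector [a,b,c,d] ::('a::zero)^4)$2 = b"
 "(vector [a,b,c,d] ::('a::zero)^4)$3 = c"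
 "(vector [a,b,c,d] ::('a::zero)^4)$4 = d"
  unfolding vector_def by simp_all

lemma axis4 [simp]:
  "axis (1::4) (1::real) = vector [1,0,0,0]"
  "axis (2::4) (1::real) = vector [0,1,0,0]"
  "axis (3::4) (1::real) = vector [0,0,1,0]"
  "axis (4::4) (1::real) = vector [0,0,0,1]"
  by (auto simp: vec_eq_iff forall_4 axis_def)

lemma Ppol_eq: "Ppol p q \<mu> x = \<mu> * (of_real (x$1)^p * cis (real p * x$2) + of_real (x$1) * cis (- x$2))
   + of_real (x$3)^q * cis (real q * x$4) + of_real (x$3) * cis (- x$4)"
  unfolding Ppol_def Pc_def by (simp add: power_mult_distrib Complex.DeMoivre cis_cnj)

lemma term_deriv:
  "((\<lambda>t. complex_of_real (a + t*b)^n * cis (m*(c + t*e))) has_vector_derivative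
     (cis (m*c) * (of_real b * of_nat n * of_real a^(n-1) + \<i> * of_real m * of_real e * of_real a^n))) (at 0)"
proof -
  define g where "g = (\<lambda>w. (of_real a + w * of_real b)^n * exp (\<i> * of_real m * (of_real c + w * of_real e)))"
  have "(g has_field_derivative (cis (m*c) * (of_real b * of_nat n * of_real a^(n-1) + \<i> * of_real m * of_real e * of_real a^n))) (at (of_real 0))"
    unfolding g_def
    by (auto intro!: derivative_eq_intros simp: cis_conv_exp algebra_simps)
  from has_vector_derivative_real_field[OF this]
  show ?thesis unfolding g_def by (simp add: cis_conv_exp algebra_simps)
qed

definition DP :: "nat \<Rightarrow> nat \<Rightarrow> complex \<Rightarrow> real^4 \<Rightarrow> real^4 \<Rightarrow> complex" where
  "DP p q \<mu> x d = \<mu> * (cis (real p * x$2) * (of_real (d$1) * of_nat p * of_real (x$1)^(p-1) + \<i> * of_nat p * of_real (d$2) * of_real (x$1)^p)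
      + cis (- x$2) * (of_real (d$1) - \<i> * of_real (d$2) * of_real (x$1)))
   + (cis (real q * x$4) * (of_real (d$3) * of_nat q * of_real (x$3)^(q-1) + \<i> * of_nat q * of_real (d$4) * of_real (x$3)^q)
      + cis (- x$4) * (of_real (d$3) - \<i> * of_real (d$4) * of_real (x$3)))"

lemma DP_deriv: "((\<lambda>t. Ppol p q \<mu> (x + t *\<^sub>R d)) has_vector_derivative DP p q \<mu> x d) (at 0)"
proof -
  have e: "(\<lambda>t. Ppol p q \<mu> (x + t *\<^sub>R d)) = (\<lambda>t. \<mu> * (complex_of_real (x$1 + t*d$1)^p * cis (real p*(x$2 + t*d$2))
        + complex_of_real (x$1 + t*d$1)^1 * cis ((-1)*(x$2 + t*d$2)))
      + complex_of_real (x$3 + t*d$3)^q * cis (real q*(x$4 + t*d$4))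
        + complex_of_real (x$3 + t*d$3)^1 * cis ((-1)*(x$4 + t*d$4)))"
    by (simp add: Ppol_eq)
  show ?thesis unfolding e
    apply (rule has_vector_derivative_eq_rhs)
    apply (rule has_vector_derivative_add has_vector_derivative_mult_right term_deriv)+
    apply (simp add: DP_def algebra_simps)
    done
qed

definition D2P :: "nat \<Rightarrow> nat \<Rightarrow> complex \<Rightarrow> real^4 \<Rightarrow> real^4 \<Rightarrow> real^4 \<Rightarrow> complex" where
  "D2P p q \<mu> x e d = \<mu> * (of_real (d$1) * of_nat p * cis (real p * x$2) * (of_real (e$1) * of_nat (p-1) * of_real (x$1)^(p-2) + \<i> * of_nat p * of_real (e$2) * of_real (x$1)^(p-1))
      + \<i> * of_nat p * of_real (d$2) * cis (real p * x$2) * (of_real (e$1) * of_nat p * of_real (x$1)^(p-1) + \<i> * of_nat p * of_real (e$2) * of_real (x$1)^p)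
      - \<i> * of_real (d$1) * cis (- x$2) * of_real (e$2)
      - \<i> * of_real (d$2) * cis (- x$2) * (of_real (e$1) - \<i> * of_real (e$2) * of_real (x$1)))
   + (of_real (d$3) * of_nat q * cis (real q * x$4) * (of_real (e$3) * of_nat (q-1) * of_real (x$3)^(q-2) + \<i> * of_nat q * of_real (e$4) * of_real (x$3)^(q-1))
      + \<i> * of_nat q * of_real (d$4) * cis (real q * x$4) * (of_real (e$3) * of_nat q * of_real (x$3)^(q-1) + \<i> * of_nat q * of_real (e$4) * of_real (x$3)^q)
      - \<i> * of_real (d$3) * cis (- x$4) * of_real (e$4)
      - \<i> * of_real (d$4) * cis (- x$4) * (of_real (e$3) - \<i> * of_real (e$4) * of_real (x$3)))"

lemma D2P_deriv: "((\<lambda>t. DP p q \<mu> (x + t *\<^sub>R e) d) has_vector_derivative D2P p q \<mu> x e d) (at 0)"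
proof -
  have h: "(\<lambda>t. DP p q \<mu> (x + t *\<^sub>R e) d) = (\<lambda>t. \<mu> * (
          (of_real (d$1) * of_nat p) * (complex_of_real (x$1 + t*e$1)^(p-1) * cis (real p*(x$2 + t*e$2)))
        + (\<i> * of_nat p * of_real (d$2)) * (complex_of_real (x$1 + t*e$1)^p * cis (real p*(x$2 + t*e$2)))
        + of_real (d$1) * (complex_of_real (x$1 + t*e$1)^0 * cis ((-1)*(x$2 + t*e$2)))
        + (- \<i> * of_real (d$2)) * (complex_of_real (x$1 + t*e$1)^1 * cis ((-1)*(x$2 + t*e$2))))
      + ((of_real (d$3) * of_nat q) * (complex_of_real (x$3 + t*e$3)^(q-1) * cis (real q*(x$4 + t*e$4)))
        + (\<i> * of_nat q * of_real (d$4)) * (complex_of_real (x$3 + t*e$3)^q * cis (real q*(x$4 + t*e$4)))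
        + of_real (d$3) * (complex_of_real (x$3 + t*e$3)^0 * cis ((-1)*(x$4 + t*e$4)))
        + (- \<i> * of_real (d$4)) * (complex_of_real (x$3 + t*e$3)^1 * cis ((-1)*(x$4 + t*e$4)))))"
    by (simp add: DP_def algebra_simps fun_eq_iff)
  show ?thesis unfolding h
    apply (rule has_vector_derivative_eq_rhs)
    apply (rule has_vector_derivative_add has_vector_derivative_mult_right term_deriv)+
    apply (simp add: D2P_def algebra_simps numeral_2_eq_2)
    done
qed

lemma pd_gen:
  assumes "\<And>y t w. A (y + t *\<^sub>R w) = A y + t *\<^sub>R A w"
  shows "pd (\<lambda>y. Im (c * Ppol p q \<mu> (A y))) i y = Im (c * DP p q \<mu> (A y) (A (axis i 1)))"
proof -
  have "((\<lambda>t. Im (c * Ppol p q \<mu> (A y + t *\<^sub>R A (axis i 1)))) has_field_derivative Im (c * DP p q \<mu> (A y) (A (axis i 1)))) (at 0)"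
    by (intro has_field_derivative_Im has_vector_derivative_mult_right DP_deriv)
  then show ?thesis unfolding pd_def assms by (rule DERIV_imp_deriv)
qed

lemma pd2_gen:
  assumes "\<And>y t w. A (y + t *\<^sub>R w) = A y + t *\<^sub>R A w"
  shows "pd (\<lambda>y. Im (c * DP p q \<mu> (A y) D)) i y = Im (c * D2P p q \<mu> (A y) (A (axis i 1)) D)"
proof -
  have "((\<lambda>t. Im (c * DP p q \<mu> (A y + t *\<^sub>R A (axis i 1)) D)) has_field_derivative Im (c * D2P p q \<mu> (A y) (A (axis i 1)) D)) (at 0)"
    by (intro has_field_derivative_Im has_vector_derivative_mult_right D2P_deriv)
  then show ?thesis unfolding pd_def assms by (rule DERIV_imp_deriv)
qed

lemma ninv_lin: "newcoord_inv k (y + t *\<^sub>R w) = newcoord_inv k y + t *\<^sub>R newcoord_inv k w"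
  by (simp add: newcoord_inv_def vec_eq_iff forall_4 field_simps add_divide_distrib diff_divide_distrib)



lemma PR_alt: "PR p q \<mu> = (\<lambda>x. Re (Pc p q \<mu> (Complex (x$1) (x$2)) (Complex (x$3) (x$4))) *\<^sub>R axis 1 1
   + Im (Pc p q \<mu> (Complex (x$1) (x$2)) (Complex (x$3) (x$4))) *\<^sub>R axis 2 1)"
  by (auto simp: fun_eq_iff PR_def vec_eq_iff forall_2 axis_def Let_def)

lemma Complex_alt: "Complex a b = of_real a + \<i> * of_real b"
  by (simp add: complex_eq_iff)

lemmas vnth_der = bounded_linear.has_derivative[OF bounded_linear_vec_nth]
lemmas ofr_der = bounded_linear.has_derivative[OF bounded_linear_of_real]

lemma PR_diff: "PR p q \<mu> differentiable (at X)"
  unfolding PR_alt Pc_def Complex_alt differentiable_def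
  by (rule exI, (rule derivative_intros vnth_der ofr_der)+)

lemma Pc_line: "((\<lambda>t. Pc p q \<mu> (u0 + of_real t * du) (v0 + of_real t * dv)) has_vector_derivative
   (\<mu> * (of_nat p * u0^(p-1) * du + cnj du) + (of_nat q * v0^(q-1) * dv + cnj dv))) (at 0)"
proof -
  define g where "g = (\<lambda>w. \<mu> * ((u0 + w*du)^p + (cnj u0 + w * cnj du)) + ((v0 + w*dv)^q + (cnj v0 + w * cnj dv)))"
  have "(g has_field_derivative (\<mu> * (of_nat p * u0^(p-1) * du + cnj du) + (of_nat q * v0^(q-1) * dv + cnj dv))) (at (of_real 0))"
    unfolding g_def by (auto intro!: derivative_eq_intros)
  from has_vector_derivative_real_field[OF this]
  show ?thesis unfolding g_def Pc_def by (simp add: algebra_simps)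
qed

lemma line_fd:
  assumes "(f has_derivative f') (at X)"
  shows "((\<lambda>t. f (X + t *\<^sub>R e)) has_vector_derivative f' e) (at 0)"
proof -
  have l: "((\<lambda>t. X + t *\<^sub>R e) has_derivative (\<lambda>t. t *\<^sub>R e)) (at 0)"
    by (auto intro!: derivative_eq_intros)
  have f: "(f has_derivative f') (at ((\<lambda>t. X + t *\<^sub>R e) 0))" using assms by simp
  have "((\<lambda>t. f (X + t *\<^sub>R e)) has_derivative (\<lambda>t. f' (t *\<^sub>R e))) (at 0)"
    using has_derivative_compose[OF l f] by simp
  moreover have "linear f'" using assms has_derivative_linear by blast
  ultimately show ?thesis unfolding has_vector_derivative_def
    by (simp add: linear_scale)
qed

lemma col_val:
  assumes fd: "(PR p q \<mu> has_derivative f') (at X)"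
    and cu: "\<And>t. Complex ((X + t *\<^sub>R e)$1) ((X + t *\<^sub>R e)$2) = u0 + of_real t * du"
    and cv: "\<And>t. Complex ((X + t *\<^sub>R e)$3) ((X + t *\<^sub>R e)$4) = v0 + of_real t * dv"
  defines "D \<equiv> \<mu> * (of_nat p * u0^(p-1) * du + cnj du) + (of_nat q * v0^(q-1) * dv + cnj dv)"
  shows "f' e $ 1 = Re D" "f' e $ 2 = Im D"
proof -
  have v: "((\<lambda>t. PR p q \<mu> (X + t *\<^sub>R e)) has_vector_derivative f' e) (at 0)"
    by (rule line_fd[OF fd])
  have eq: "PR p q \<mu> (X + t *\<^sub>R e) = vector [Re (Pc p q \<mu> (u0 + of_real t * du) (v0 + of_real t * dv)), Im (Pc p q \<mu> (u0 + of_real t * du) (v0 + of_real t * dv))]" for t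
    unfolding PR_def Let_def cu cv ..
  have P: "((\<lambda>t. Pc p q \<mu> (u0 + of_real t * du) (v0 + of_real t * dv)) has_vector_derivative D) (at 0)"
    unfolding D_def by (rule Pc_line)
  have "((\<lambda>t. PR p q \<mu> (X + t *\<^sub>R e) $ i) has_vector_derivative f' e $ i) (at 0)" for i
    by (rule bounded_linear.has_vector_derivative[OF bounded_linear_vec_nth v])
  hence d1: "((\<lambda>t. PR p q \<mu> (X + t *\<^sub>R e) $ i) has_real_derivative f' e $ i) (at 0)" for i
    by (simp add: has_real_derivative_iff_has_vector_derivative)
  have r1: "((\<lambda>t. PR p q \<mu> (X + t *\<^sub>R e) $ 1) has_real_derivative Re D) (at 0)"
    unfolding eq vector_2 by (rule has_field_derivative_Re[OF P])
  have r2: "((\<lambda>t. PR p q \<mu> (X + t *\<^sub>R e) $ 2) has_real_derivative Im D) (at 0)"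
    unfolding eq vector_2 by (rule has_field_derivative_Im[OF P])
  show "f' e $ 1 = Re D" using DERIV_unique[OF d1 r1] .
  show "f' e $ 2 = Im D" using DERIV_unique[OF d1 r2] .
qed

lemma rank_cols:
  fixes A :: "real^4^2"
  assumes "rank A < 2"
  shows "A$1$a * A$2$b - A$1$b * A$2$a = 0"
proof -
  define S :: "real^2^4" where "S = (\<chi> k j. if k = (if j = 1 then a else b) then 1 else 0)"
  have "rank (A ** S) < CARD(2)" using rank_mul_le_left[of A S] assms by simp
  hence "det (A ** S) = 0" by (simp add: det_eq_0_rank)
  moreover have "(A ** S) $ i $ j = A $ i $ (if j = 1 then a else b)" for i j
    by (simp add: matrix_matrix_mult_def S_def if_distrib[of "\<lambda>x. _ * x"] cong: if_cong)
  ultimately show ?thesis by (simp add: det_2)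
qed

lemma cross_id: "Re (\<mu> * (a + 1)) * Im (\<mu> * (a * \<i> - \<i>)) - Re (\<mu> * (a * \<i> - \<i>)) * Im (\<mu> * (a + 1))
   = (cmod \<mu>)^2 * ((cmod a)^2 - 1)"
  unfolding cmod_power2 by (simp add: algebra_simps power2_eq_square)

lemma sing_mod:
  assumes sp: "singular_point p q \<mu> u0 v0" and mu: "\<mu> \<noteq> 0"
  shows "real p * cmod u0^(p-1) = 1 \<and> real q * cmod v0^(q-1) = 1"
proof -
  define X :: "real^4" where "X = vector [Re u0, Im u0, Re v0, Im v0]"
  define f' where "f' = frechet_derivative (PR p q \<mu>) (at X)"
  have fd: "(PR p q \<mu> has_derivative f') (at X)"
    unfolding f'_def using PR_diff frechet_derivative_works by blast
  have rk: "rank (matrix f') < 2" using sp unfolding singular_point_def f'_def X_def by simp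
  have A: "matrix f' $ i $ j = f' (axis j 1) $ i" for i j by (simp add: matrix_def)
  note cv = col_val[OF fd]
  have c1: "f' (axis 1 1) $ 1 = Re (\<mu> * (of_nat p * u0^(p-1) + 1))" "f' (axis 1 1) $ 2 = Im (\<mu> * (of_nat p * u0^(p-1) + 1))"
    using cv[of "axis 1 1" u0 1 v0 0] by (simp_all add: X_def complex_eq_iff)
  have c2: "f' (axis 2 1) $ 1 = Re (\<mu> * (of_nat p * u0^(p-1) * \<i> - \<i>))" "f' (axis 2 1) $ 2 = Im (\<mu> * (of_nat p * u0^(p-1) * \<i> - \<i>))"
    using cv[of "axis 2 1" u0 \<i> v0 0] by (simp_all add: X_def complex_eq_iff)
  have c3: "f' (axis 3 1) $ 1 = Re (1 * (of_nat q * v0^(q-1) + 1))" "f' (axis 3 1) $ 2 = Im (1 * (of_nat q * v0^(q-1) + 1))"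
    using cv[of "axis 3 1" u0 0 v0 1] by (simp_all add: X_def complex_eq_iff)
  have c4: "f' (axis 4 1) $ 1 = Re (1 * (of_nat q * v0^(q-1) * \<i> - \<i>))" "f' (axis 4 1) $ 2 = Im (1 * (of_nat q * v0^(q-1) * \<i> - \<i>))"
    using cv[of "axis 4 1" u0 0 v0 \<i>] by (simp_all add: X_def complex_eq_iff)
  have "(cmod \<mu>)^2 * ((cmod (of_nat p * u0^(p-1)))^2 - 1) = 0"
    using rank_cols[OF rk, of 1 2] unfolding A cross_id[symmetric] c1 c2 .
  hence "(cmod (of_nat p * u0^(p-1)))^2 = 1" using mu by simp
  hence a: "cmod (of_nat p * u0^(p-1)) = 1" using norm_ge_zero[of "_::complex"] by (smt (verit) power2_eq_1_iff)
  have "(cmod 1)^2 * ((cmod (of_nat q * v0^(q-1)))^2 - 1) = 0"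
    using rank_cols[OF rk, of 3 4] unfolding A cross_id[symmetric] c3 c4 .
  hence "(cmod (of_nat q * v0^(q-1)))^2 = 1" by simp
  hence b: "cmod (of_nat q * v0^(q-1)) = 1" using norm_ge_zero[of "_::complex"] by (smt (verit) power2_eq_1_iff)
  show ?thesis using a b by (simp add: norm_mult norm_power)
qed



lemma inv_m1_pow: "inverse ((-1::'a::field)^n) = (-1)^n"
  by (induct n) auto

lemma cis_int_pi: "cis (real_of_int k * pi) = complex_of_real ((-1) powi k)"
proof (cases "k \<ge> 0")
  case True
  then obtain n where n: "k = int n" using nonneg_int_cases by blast
  have "cis (real n * pi) = cis pi ^ n" by (rule Complex.DeMoivre[symmetric])
  moreover have "cis pi = -1" by (simp add: complex_eq_iff)
  ultimately show ?thesis using n by (simp add: power_int_of_nat)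
next
  case False
  then have "- k \<ge> 0" by simp
  then obtain n where "- k = int n" using nonneg_int_cases by blast
  then have n: "k = - int n" by simp
  have "cis (- (real n * pi)) = cnj (cis (real n * pi))" by (simp add: cis_cnj)
  also have "cis (real n * pi) = cis pi ^ n" by (rule Complex.DeMoivre[symmetric])
  moreover have "cis pi = -1" by (simp add: complex_eq_iff)
  ultimately have "cis (- (real n * pi)) = (-1)^n" by simp
  then show ?thesis using n by (simp add: power_int_minus power_int_of_nat inv_m1_pow)
qed

lemma D2P_split: "D2P p q \<mu> x e d =
     (\<mu> * cis (real p * x$2)) * (of_real (d$1*e$1*(real p * real (p-1) * (x$1)^(p-2)) - d$2*e$2*(real p * real p * (x$1)^p)) + \<i> * of_real ((d$1*e$2 + d$2*e$1)*(real p * real p * (x$1)^(p-1))))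
   + (\<mu> * cis (- x$2)) * (of_real (- d$2*e$2*x$1) + \<i> * of_real (- (d$1*e$2 + d$2*e$1)))
   + cis (real q * x$4) * (of_real (d$3*e$3*(real q * real (q-1) * (x$3)^(q-2)) - d$4*e$4*(real q * real q * (x$3)^q)) + \<i> * of_real ((d$3*e$4 + d$4*e$3)*(real q * real q * (x$3)^(q-1))))
   + cis (- x$4) * (of_real (- d$4*e$4*x$3) + \<i> * of_real (- (d$3*e$4 + d$4*e$3)))"
  unfolding D2P_def by (simp add: algebra_simps)

lemma DP_split: "DP p q \<mu> x d =
     (\<mu> * cis (real p * x$2)) * (of_real (d$1 * (real p * (x$1)^(p-1))) + \<i> * of_real (d$2 * (real p * (x$1)^p)))
   + (\<mu> * cis (- x$2)) * (of_real (d$1) + \<i> * of_real (- d$2 * x$1))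
   + cis (real q * x$4) * (of_real (d$3 * (real q * (x$3)^(q-1))) + \<i> * of_real (d$4 * (real q * (x$3)^q)))
   + cis (- x$4) * (of_real (d$3) + \<i> * of_real (- d$4 * x$3))"
  unfolding DP_def by (simp add: algebra_simps)

lemma factor4: "E*a*A + E*b*B + E*c*C + E*d*D = E * (a*A + b*B + c*C + d*D)" for E :: complex
  by (simp add: algebra_simps)

lemma point_calc:
  fixes x :: "real^4"
  assumes x1: "x$1 = r1" and x3: "x$3 = r2" and r1: "r1 > 0" and r2: "r2 > 0" and p: "p \<ge> 2" and q: "q \<ge> 2"
    and pr1: "real p * r1^(p-1) = 1" and qr2: "real q * r2^(q-1) = 1"
    and c1: "\<mu> * cis (real p * x$2) = E * of_real m * U" and c2: "\<mu> * cis (- x$2) = E * of_real m * cnj U"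
    and c3: "cis (real q * x$4) = E * of_real \<epsilon> * V" and c4: "cis (- x$4) = E * of_real \<epsilon> * cnj V"
  shows "DP p q \<mu> x d = E * of_real (d$1 * (2*m*Re U) + d$2 * (-2*m*r1*Im U) + d$3 * (2*\<epsilon>*Re V) + d$4 * (-2*\<epsilon>*r2*Im V))"
    and "D2P p q \<mu> x e d = E * ( of_real m * U * (of_real (d$1*e$1*((real p - 1)/r1) - d$2*e$2*(real p * r1)) + \<i> * of_real ((d$1*e$2 + d$2*e$1)*real p))
        + of_real m * cnj U * (of_real (- d$2*e$2*r1) + \<i> * of_real (- (d$1*e$2 + d$2*e$1)))
        + of_real \<epsilon> * V * (of_real (d$3*e$3*((real q - 1)/r2) - d$4*e$4*(real q * r2)) + \<i> * of_real ((d$3*e$4 + d$4*e$3)*real q))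
        + of_real \<epsilon> * cnj V * (of_real (- d$4*e$4*r2) + \<i> * of_real (- (d$3*e$4 + d$4*e$3))))"
proof -
  obtain n where pn: "p = Suc (Suc n)" using p by (metis add_2_eq_Suc le_Suc_ex)
  obtain n' where qn: "q = Suc (Suc n')" using q by (metis add_2_eq_Suc le_Suc_ex)
  have pp: "real p * r1^p = r1" using pr1 unfolding pn by (simp add: algebra_simps)
  have qq: "real q * r2^q = r2" using qr2 unfolding qn by (simp add: algebra_simps)
  have pp2: "real p * real (p-1) * r1^(p-2) = (real p - 1)/r1"
  proof -
    have "r1 * (real p * r1^(p-2)) = 1" using pr1 unfolding pn by (simp add: algebra_simps)
    hence "real p * r1^(p-2) = 1/r1" using r1 by (simp add: eq_divide_eq mult.commute)
    moreover have "real p * real (p-1) * r1^(p-2) = real (p-1) * (real p * r1^(p-2))" by simp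
    ultimately show ?thesis using p by (simp add: of_nat_diff)
  qed
  have qq2: "real q * real (q-1) * r2^(q-2) = (real q - 1)/r2"
  proof -
    have "r2 * (real q * r2^(q-2)) = 1" using qr2 unfolding qn by (simp add: algebra_simps)
    hence "real q * r2^(q-2) = 1/r2" using r2 by (simp add: eq_divide_eq mult.commute)
    moreover have "real q * real (q-1) * r2^(q-2) = real (q-1) * (real q * r2^(q-2))" by simp
    ultimately show ?thesis using q by (simp add: of_nat_diff)
  qed
  have pp3: "real p * real p * r1^p = real p * r1" "real p * real p * r1^(p-1) = real p"
    using pp pr1 by (simp_all add: mult.assoc)
  have qq3: "real q * real q * r2^q = real q * r2" "real q * real q * r2^(q-1) = real q"
    using qq qr2 by (simp_all add: mult.assoc)
  have "DP p q \<mu> x d = E * (of_real m * U * (of_real (d$1) + \<i> * of_real (d$2 * r1)) + of_real m * cnj U * (of_real (d$1) + \<i> * of_real (- d$2 * r1))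
     + of_real \<epsilon> * V * (of_real (d$3) + \<i> * of_real (d$4 * r2)) + of_real \<epsilon> * cnj V * (of_real (d$3) + \<i> * of_real (- d$4 * r2)))"
    unfolding DP_split c1 c2 c3 c4 x1 x3 pr1 qr2 pp qq mult.assoc[symmetric] by (simp add: ring_distribs mult.assoc)
  also have "\<dots> = E * of_real (d$1 * (2*m*Re U) + d$2 * (-2*m*r1*Im U) + d$3 * (2*\<epsilon>*Re V) + d$4 * (-2*\<epsilon>*r2*Im V))"
    by (simp add: complex_eq_iff algebra_simps)
  finally show "DP p q \<mu> x d = E * of_real (d$1 * (2*m*Re U) + d$2 * (-2*m*r1*Im U) + d$3 * (2*\<epsilon>*Re V) + d$4 * (-2*\<epsilon>*r2*Im V))" .
  show "D2P p q \<mu> x e d = E * ( of_real m * U * (of_real (d$1*e$1*((real p - 1)/r1) - d$2*e$2*(real p * r1)) + \<i> * of_real ((d$1*e$2 + d$2*e$1)*real p))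
        + of_real m * cnj U * (of_real (- d$2*e$2*r1) + \<i> * of_real (- (d$1*e$2 + d$2*e$1)))
        + of_real \<epsilon> * V * (of_real (d$3*e$3*((real q - 1)/r2) - d$4*e$4*(real q * r2)) + \<i> * of_real ((d$3*e$4 + d$4*e$3)*real q))
        + of_real \<epsilon> * cnj V * (of_real (- d$4*e$4*r2) + \<i> * of_real (- (d$3*e$4 + d$4*e$3))))"
    unfolding D2P_split c1 c2 c3 c4 x1 x3 pp2 qq2 pp3 qq3 mult.assoc[symmetric] by (simp add: ring_distribs mult.assoc)
qed



lemma Y_Im:
  assumes "r1 \<noteq> 0" "r2 \<noteq> 0"
  shows "Im (of_real m * U * (of_real (d$1*e$1*((real p - 1)/r1) - d$2*e$2*(real p * r1)) + \<i> * of_real ((d$1*e$2 + d$2*e$1)*real p))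
        + of_real m * cnj U * (of_real (- d$2*e$2*r1) + \<i> * of_real (- (d$1*e$2 + d$2*e$1)))
        + of_real \<epsilon> * V * (of_real (d$3*e$3*((real q - 1)/r2) - d$4*e$4*(real q * r2)) + \<i> * of_real ((d$3*e$4 + d$4*e$3)*real q))
        + of_real \<epsilon> * cnj V * (of_real (- d$4*e$4*r2) + \<i> * of_real (- (d$3*e$4 + d$4*e$3))))
   = d$1*e$1*(m*(real p-1)*Im U/r1) + (d$1*e$2+d$2*e$1)*(m*(real p-1)*Re U) + d$2*e$2*(-m*r1*(real p-1)*Im U)
   + d$3*e$3*(\<epsilon>*(real q-1)*Im V/r2) + (d$3*e$4+d$4*e$3)*(\<epsilon>*(real q-1)*Re V) + d$4*e$4*(-\<epsilon>*r2*(real q-1)*Im V)"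
  using assms by (simp add: field_simps)

lemma alg:
  fixes p q m r1 r2 C1 S1 C3 S3 e :: real
  assumes "C1 \<noteq> 0" "m \<noteq> 0" "r1 \<noteq> 0" "r2 \<noteq> 0" "C1^2 + S1^2 = 1" "C3^2+S3^2 = 1" "e^2 = 1"
  and "c2 = -r1*S1/C1" "c3 = e*C3/(m*C1)" "c4 = -e*r2*S3/(m*C1)"
  and "N11=m*(p-1)*S1/r1" "N12=m*(p-1)*C1" "N22=-m*r1*(p-1)*S1" "N33=e*(q-1)*S3/r2" "N34=e*(q-1)*C3" "N44=-e*r2*(q-1)*S3"
  shows "(c2*c2*N11-2*c2*N12+N22) * ((c3*c3*N11+N33)*(c4*c4*N11+N44) - (c3*c4*N11+N34)*(c3*c4*N11+N34))
       - (c2*c3*N11-c3*N12) * ((c2*c3*N11-c3*N12)*(c4*c4*N11+N44) - (c3*c4*N11+N34)*(c2*c4*N11-c4*N12))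
       + (c2*c4*N11-c4*N12) * ((c2*c3*N11-c3*N12)*(c3*c4*N11+N34) - (c3*c3*N11+N33)*(c2*c4*N11-c4*N12))
       = -(p-1)*(q-1)*(e*(p-1)*r2*S3+(q-1)*m*r1*S1)/C1^2"
  using assms(1-7)
  unfolding assms(8-16)
  apply (simp add: field_simps)
  apply algebra
  done

lemma det3_div:
  fixes a b c d e f g h i y :: real
  assumes "y \<noteq> 0"
  shows "det (vector [vector [a/y, b/y, c/y], vector [d/y, e/y, f/y], vector [g/y, h/y, i/y]] :: real^3^3)
    = (a*(e*i - f*h) - b*(d*i - f*g) + c*(d*h - e*g)) / y^3"
  unfolding det_3 using assms by (simp add: field_simps power3_eq_cube)

lemma Im_ofr_mult: "Im (complex_of_real r * z) = r * Im z" by simp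

lemma ninv_axis:
  "newcoord_inv k (axis 1 1) = vector [1/k$1, 0, 0, 0]"
  "newcoord_inv k (axis 2 1) = vector [-(k$2/k$1), 1, 0, 0]"
  "newcoord_inv k (axis 3 1) = vector [-(k$3/k$1), 0, 1, 0]"
  "newcoord_inv k (axis 4 1) = vector [-(k$4/k$1), 0, 0, 1]"
  by (simp_all add: newcoord_inv_def)

lemma ninv_newcoord: "k$1 \<noteq> 0 \<Longrightarrow> newcoord_inv k (newcoord k z) = z"
  by (simp add: newcoord_inv_def newcoord_def vec_eq_iff forall_4 field_simps)

theorem proposition3p9:
  fixes p q :: nat and \<mu> u0 v0 :: complex and a1 a2 am :: real and \<kappa> :: int
  assumes "p \<ge> 2" and "q \<ge> 2" and "\<mu> \<noteq> 0"
    and "singular_point p q \<mu> u0 v0"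
    and "u0 = of_real (cmod u0) * cis a1"
    and "v0 = of_real (cmod v0) * cis a2"
    and "\<mu> = of_real (cmod \<mu>) * cis am"
    and "(real p - 1) / 2 * a1 + am = (real q - 1) / 2 * a2 + real_of_int \<kappa> * pi"
    and "kvec p q \<mu> (vector [cmod u0, a1, cmod v0, a2]) $ 1 \<noteq> 0"
  shows "det (hessRhat p q \<mu> (vector [cmod u0, a1, cmod v0, a2])) =
           - (4 * (real p - 1) * (real q - 1) * (cmod \<mu>)\<^sup>2)
             / ((kvec p q \<mu> (vector [cmod u0, a1, cmod v0, a2]) $ 1)\<^sup>2
                * cos ((real p - 1) / 2 * a1 + am))
           * ((-1) powi \<kappa> * (real p - 1) * cmod v0 * sin ((real q + 1) / 2 * a2)
              + (real q - 1) * cmod \<mu> * cmod u0 * sin ((real p + 1) / 2 * a1))"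
proof -
  note p = assms(1) and q = assms(2) and mu = assms(3) and mueq = assms(7) and kap = assms(8)
  define r1 where "r1 = cmod u0"
  define r2 where "r2 = cmod v0"
  define m where "m = cmod \<mu>"
  define z :: "real^4" where "z = vector [r1, a1, r2, a2]"
  have pr1: "real p * r1^(p-1) = 1" and qr2: "real q * r2^(q-1) = 1"
    using sing_mod[OF assms(4) mu] unfolding r1_def r2_def by auto
  have r1: "r1 > 0"
  proof (rule ccontr)
    assume "\<not> r1 > 0" hence "r1 = 0" unfolding r1_def by simp
    thus False using pr1 p by (simp add: power_0_left)
  qed
  have r2: "r2 > 0"
  proof (rule ccontr)
    assume "\<not> r2 > 0" hence "r2 = 0" unfolding r2_def by simp
    thus False using qr2 q by (simp add: power_0_left)
  qed
  define T1 where "T1 = (real p + 1) / 2 * a1"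
  define T2 where "T2 = (real p - 1) / 2 * a1 + am"
  define T3 where "T3 = (real q + 1) / 2 * a2"
  define T4 where "T4 = (real q - 1) / 2 * a2"
  define \<epsilon> :: real where "\<epsilon> = (-1) powi \<kappa>"
  define E where "E = cis T2"
  define U where "U = cis T1"
  define V where "V = cis T3"
  have ceps: "cis (real_of_int \<kappa> * pi) = of_real \<epsilon>" unfolding \<epsilon>_def by (rule cis_int_pi)
  have eps2: "\<epsilon>^2 = 1"
  proof -
    have "(of_real \<epsilon> :: complex)^2 = cis (real_of_int \<kappa> * pi) * cis (real_of_int \<kappa> * pi)"
      unfolding ceps by (simp add: power2_eq_square)
    also have "\<dots> = cis (2 * pi * real_of_int \<kappa>)" by (simp add: cis_mult algebra_simps)
    also have "\<dots> = 1" by (rule cis_multiple_2pi) simp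
    finally have "(of_real (\<epsilon>^2) :: complex) = of_real 1" by simp
    thus ?thesis using of_real_eq_iff by blast
  qed
  have T2T4: "T2 = T4 + real_of_int \<kappa> * pi" using kap unfolding T2_def T4_def by simp
  have cT4: "cis T4 = of_real \<epsilon> * E"
  proof -
    have e: "E = cis T4 * of_real \<epsilon>" unfolding E_def T2T4 by (simp add: cis_mult[symmetric] ceps)
    have "of_real \<epsilon> * E = cis T4 * of_real (\<epsilon> * \<epsilon>)" unfolding e of_real_mult by (simp only: mult_ac)
    also have "\<epsilon> * \<epsilon> = 1" using eps2 by (simp add: power2_eq_square)
    finally show ?thesis by simp
  qed
  have muc: "\<mu> = of_real m * cis am" using mueq unfolding m_def .
  have c1: "\<mu> * cis (real p * z$2) = E * of_real m * U"
  proof -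
    have "\<mu> * cis (real p * z$2) = of_real m * cis (am + real p * a1)" unfolding muc z_def by (simp add: cis_mult)
    also have "am + real p * a1 = T2 + T1" unfolding T1_def T2_def by (simp add: field_simps)
    finally show ?thesis unfolding E_def U_def by (simp add: cis_mult[symmetric])
  qed
  have c2: "\<mu> * cis (- z$2) = E * of_real m * cnj U"
  proof -
    have "\<mu> * cis (- z$2) = of_real m * cis (am + - a1)" unfolding muc z_def by (simp add: cis_mult)
    also have "am + - a1 = T2 + - T1" unfolding T1_def T2_def by (simp add: field_simps)
    moreover have "cis (T2 + - T1) = cis T2 * cis (- T1)" by (simp only: cis_mult)
    ultimately show ?thesis unfolding E_def U_def by (simp add: cis_cnj)
  qed
  have c3: "cis (real q * z$4) = E * of_real \<epsilon> * V"
  proof -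
    have "cis (real q * z$4) = cis (T4 + T3)" unfolding z_def T3_def T4_def by (simp add: field_simps)
    thus ?thesis unfolding V_def by (simp add: cis_mult[symmetric] cT4)
  qed
  have c4: "cis (- z$4) = E * of_real \<epsilon> * cnj V"
  proof -
    have "cis (- z$4) = cis (T4 + - T3)" unfolding z_def T3_def T4_def by (simp add: field_simps)
    moreover have "cis (T4 + - T3) = cis T4 * cis (- T3)" by (simp only: cis_mult)
    ultimately show ?thesis unfolding V_def cT4 by (simp add: cis_cnj mult_ac)
  qed
  have z1: "z$1 = r1" and z3: "z$3 = r2" unfolding z_def by simp_all
  note PC = point_calc[OF z1 z3 r1 r2 p q pr1 qr2 c1 c2 c3 c4]
  define k where "k = kvec p q \<mu> z"
  have kk: "k$i = Re (DP p q \<mu> z (axis i 1))" for i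
  proof -
    have "Qpol p q \<mu> = (\<lambda>x. Im (\<i> * Ppol p q \<mu> (id x)))" by (simp add: fun_eq_iff Qpol_def)
    hence "pd (Qpol p q \<mu>) i z = Im (\<i> * DP p q \<mu> (id z) (id (axis i 1)))"
      using pd_gen[of id "\<i>" p q \<mu> i z] by simp
    thus ?thesis unfolding k_def kvec_def by simp
  qed
  define \<gamma> where "\<gamma> = cos T2"
  define \<sigma> where "\<sigma> = sin T2"
  have ReE: "Re E = \<gamma>" and ImE: "Im E = \<sigma>" unfolding E_def \<gamma>_def \<sigma>_def by simp_all
  have k1: "k$1 = \<gamma> * (2*m*Re U)" and k2: "k$2 = \<gamma> * (-2*m*r1*Im U)"
   and k3: "k$3 = \<gamma> * (2*\<epsilon>*Re V)" and k4: "k$4 = \<gamma> * (-2*\<epsilon>*r2*Im V)"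
    unfolding kk PC(1) by (simp_all add: ReE)
  have k1nz: "k$1 \<noteq> 0" using assms(9) unfolding k_def z_def r1_def r2_def .
  hence gnz: "\<gamma> \<noteq> 0" and C1nz: "Re U \<noteq> 0" and mnz: "m \<noteq> 0" using k1 by auto
  define s where "s = pd (Rnew p q \<mu> k) 1 (newcoord k z)"
  have s: "s = \<sigma> / \<gamma>"
  proof -
    have "Rnew p q \<mu> k = (\<lambda>y. Im (1 * Ppol p q \<mu> (newcoord_inv k y)))" by (simp add: fun_eq_iff Rnew_def)
    hence "s = Im (1 * DP p q \<mu> (newcoord_inv k (newcoord k z)) (newcoord_inv k (axis 1 1)))"
      unfolding s_def using pd_gen[of "newcoord_inv k" 1 p q \<mu> 1 "newcoord k z", OF ninv_lin] by simp
    also have "\<dots> = \<sigma> * (2*m*Re U) / k$1"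
      unfolding ninv_newcoord[OF k1nz] PC(1) ninv_axis by (simp add: ImE)
    finally show ?thesis unfolding k1 using C1nz mnz by simp
  qed
  define cc where "cc = 1 - \<i> * of_real s"
  have Rhat_eq: "Rhat p q \<mu> z = (\<lambda>y. Im (cc * Ppol p q \<mu> (newcoord_inv k y)))"
    unfolding Rhat_def Let_def k_def[symmetric] s_def[symmetric] cc_def
    by (simp add: fun_eq_iff Rnew_def Qnew_def algebra_simps)
  have pd1: "pd (Rhat p q \<mu> z) j = (\<lambda>y. Im (cc * DP p q \<mu> (newcoord_inv k y) (newcoord_inv k (axis j 1))))" for j
    unfolding Rhat_eq by (rule ext, rule pd_gen, rule ninv_lin)
  have ccE: "cc * E = of_real (1/\<gamma>)"
  proof -
    have "\<gamma>^2 + \<sigma>^2 = 1" unfolding \<gamma>_def \<sigma>_def by simp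
    moreover have "E = Complex \<gamma> \<sigma>" using ReE ImE by (simp add: complex_eq_iff)
    ultimately show ?thesis unfolding cc_def s using gnz
      by (simp add: complex_eq_iff field_simps power2_eq_square)
  qed
  define N11 where "N11 = m*(real p-1)*Im U/r1"
  define N12 where "N12 = m*(real p-1)*Re U"
  define N22 where "N22 = -m*r1*(real p-1)*Im U"
  define N33 where "N33 = \<epsilon>*(real q-1)*Im V/r2"
  define N34 where "N34 = \<epsilon>*(real q-1)*Re V"
  define N44 where "N44 = -\<epsilon>*r2*(real q-1)*Im V"
  have hh: "pd (pd (Rhat p q \<mu> z) j) i (newcoord k z) =
     (let e = newcoord_inv k (axis i 1); d = newcoord_inv k (axis j 1) in
      (d$1*e$1*N11 + (d$1*e$2+d$2*e$1)*N12 + d$2*e$2*N22 + d$3*e$3*N33 + (d$3*e$4+d$4*e$3)*N34 + d$4*e$4*N44)) / \<gamma>" for i j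
  proof -
    have "pd (pd (Rhat p q \<mu> z) j) i (newcoord k z) = Im (cc * D2P p q \<mu> z (newcoord_inv k (axis i 1)) (newcoord_inv k (axis j 1)))"
      unfolding pd1 using pd2_gen[of "newcoord_inv k" cc p q \<mu> "newcoord_inv k (axis j 1)" i "newcoord k z", OF ninv_lin]
      by (simp add: ninv_newcoord[OF k1nz])
    also have "\<dots> = Im ((cc * E) * (of_real m * U * (of_real ((newcoord_inv k (axis j 1))$1*(newcoord_inv k (axis i 1))$1*((real p - 1)/r1) - (newcoord_inv k (axis j 1))$2*(newcoord_inv k (axis i 1))$2*(real p * r1)) + \<i> * of_real (((newcoord_inv k (axis j 1))$1*(newcoord_inv k (axis i 1))$2 + (newcoord_inv k (axis j 1))$2*(newcoord_inv k (axis i 1))$1)*real p))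
        + of_real m * cnj U * (of_real (- (newcoord_inv k (axis j 1))$2*(newcoord_inv k (axis i 1))$2*r1) + \<i> * of_real (- ((newcoord_inv k (axis j 1))$1*(newcoord_inv k (axis i 1))$2 + (newcoord_inv k (axis j 1))$2*(newcoord_inv k (axis i 1))$1)))
        + of_real \<epsilon> * V * (of_real ((newcoord_inv k (axis j 1))$3*(newcoord_inv k (axis i 1))$3*((real q - 1)/r2) - (newcoord_inv k (axis j 1))$4*(newcoord_inv k (axis i 1))$4*(real q * r2)) + \<i> * of_real (((newcoord_inv k (axis j 1))$3*(newcoord_inv k (axis i 1))$4 + (newcoord_inv k (axis j 1))$4*(newcoord_inv k (axis i 1))$3)*real q))
        + of_real \<epsilon> * cnj V * (of_real (- (newcoord_inv k (axis j 1))$4*(newcoord_inv k (axis i 1))$4*r2) + \<i> * of_real (- ((newcoord_inv k (axis j 1))$3*(newcoord_inv k (axis i 1))$4 + (newcoord_inv k (axis j 1))$4*(newcoord_inv k (axis i 1))$3)))))"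
      unfolding PC(2) by (simp only: mult.assoc)
    also have "\<dots> = (let e = newcoord_inv k (axis i 1); d = newcoord_inv k (axis j 1) in
      (d$1*e$1*N11 + (d$1*e$2+d$2*e$1)*N12 + d$2*e$2*N22 + d$3*e$3*N33 + (d$3*e$4+d$4*e$3)*N34 + d$4*e$4*N44)) / \<gamma>"
      unfolding ccE Im_ofr_mult Y_Im[OF r1[THEN less_imp_neq, symmetric] r2[THEN less_imp_neq, symmetric]]
      by (simp add: Let_def N11_def N12_def N22_def N33_def N34_def N44_def)
    finally show ?thesis .
  qed
  define c2 where "c2 = k$2/k$1"
  define c3 where "c3 = k$3/k$1"
  define c4 where "c4 = k$4/k$1"
  have ent: "pd (pd (Rhat p q \<mu> z) 2) 2 (newcoord k z) = (c2*c2*N11-2*c2*N12+N22)/\<gamma>"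
    "pd (pd (Rhat p q \<mu> z) 3) 2 (newcoord k z) = (c2*c3*N11-c3*N12)/\<gamma>"
    "pd (pd (Rhat p q \<mu> z) 4) 2 (newcoord k z) = (c2*c4*N11-c4*N12)/\<gamma>"
    "pd (pd (Rhat p q \<mu> z) 2) 3 (newcoord k z) = (c2*c3*N11-c3*N12)/\<gamma>"
    "pd (pd (Rhat p q \<mu> z) 3) 3 (newcoord k z) = (c3*c3*N11+N33)/\<gamma>"
    "pd (pd (Rhat p q \<mu> z) 4) 3 (newcoord k z) = (c3*c4*N11+N34)/\<gamma>"
    "pd (pd (Rhat p q \<mu> z) 2) 4 (newcoord k z) = (c2*c4*N11-c4*N12)/\<gamma>"
    "pd (pd (Rhat p q \<mu> z) 3) 4 (newcoord k z) = (c3*c4*N11+N34)/\<gamma>"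
    "pd (pd (Rhat p q \<mu> z) 4) 4 (newcoord k z) = (c4*c4*N11+N44)/\<gamma>"
    unfolding hh by (simp_all add: Let_def newcoord_inv_def c2_def c3_def c4_def algebra_simps)
  have hess: "hessRhat p q \<mu> z = vector [vector [(c2*c2*N11-2*c2*N12+N22)/\<gamma>, (c2*c3*N11-c3*N12)/\<gamma>, (c2*c4*N11-c4*N12)/\<gamma>],
      vector [(c2*c3*N11-c3*N12)/\<gamma>, (c3*c3*N11+N33)/\<gamma>, (c3*c4*N11+N34)/\<gamma>],
      vector [(c2*c4*N11-c4*N12)/\<gamma>, (c3*c4*N11+N34)/\<gamma>, (c4*c4*N11+N44)/\<gamma>]]"
    unfolding hessRhat_def Let_def k_def[symmetric] ent ..
  have U2: "(Re U)^2 + (Im U)^2 = 1" and V2: "(Re V)^2 + (Im V)^2 = 1" unfolding U_def V_def by simp_all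
  have c2v: "c2 = -r1*Im U/Re U" unfolding c2_def k1 k2 using gnz mnz by (simp add: field_simps)
  have c3v: "c3 = \<epsilon>*Re V/(m*Re U)" unfolding c3_def k1 k3 using gnz mnz by (simp add: field_simps)
  have c4v: "c4 = -\<epsilon>*r2*Im V/(m*Re U)" unfolding c4_def k1 k4 using gnz mnz by (simp add: field_simps)
  have A: "det (hessRhat p q \<mu> z) = (-(real p-1)*(real q-1)*(\<epsilon>*(real p-1)*r2*Im V+(real q-1)*m*r1*Im U)/(Re U)^2) / \<gamma>^3"
    unfolding hess det3_div[OF gnz]
    using alg[OF C1nz mnz _ _ U2 V2 eps2 c2v c3v c4v N11_def N12_def N22_def N33_def N34_def N44_def] r1 r2
    by simp
  have goal: "det (hessRhat p q \<mu> z) = -(4*(real p-1)*(real q-1)*m^2)/((k$1)^2 * cos T2) * (\<epsilon>*(real p-1)*r2 * sin T3 + (real q-1)*m*r1 * sin T1)"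
    unfolding A k1 \<gamma>_def[symmetric] using gnz mnz C1nz
    by (simp add: U_def V_def field_simps power2_eq_square power3_eq_cube)
  show ?thesis using goal unfolding z_def k_def r1_def r2_def m_def T1_def T2_def T3_def \<epsilon>_def .
qed


end
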